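(* Let $1\le r\le n$ and let $\mathsf{X}\in\mathbb{R}^{n\times r}$ have unit-norm, linearly independent columns. Let $Y$ be the random subset of $\{1,\dots,n\}$ associated with $|\mathrm{columns}(\mathsf{X})\rangle$, as defined in the context. Then, for every $\mathtt{C}\subseteq\{1,\dots,n\}$ with $|\mathtt{C}|=r$, $$\mathbb{P}\big(Y=\mathtt{C}\,\big|\,|Y|=r\big)=\frac{|\det \mathsf{X}_{\mathtt{C}:}|^2}{\det(\mathsf{X}^\top\mathsf{X})}.$$
   Context: Work in $(\mathbb{C}^2)^{\otimes n}$ with computational basis $|b_1\dots b_n\rangle$, $b_i\in\{0,1\}$, where $|0\rangle=(1,0)^\top$ and $|1\rangle=(0,1)^\top$. For $1\le j\le n$, let $c_j=\sigma_z^{\otimes(j-1)}\otimes|0\rangle\langle 1|\otimes I^{\otimes(n-j)}$, with $\sigma_z=\mathrm{diag}(1,-1)$ and $I$ the $2\times2$ identity. Let $c_j^*$ be its adjoint. The vacuum is $|\emptyset\rangle=|0\cdots0\rangle$. For a unit vector $x\in\mathbb{R}^n$, the Clifford loader is $\mathcal{C}(x)=\sum_{i=1}^n x_i(c_i+c_i^* )$; it is a unitary. For $\mathsf{X}\in\mathbb{R}^{n\times r}$ with unit-norm columns $\mathsf{X}_{:1},\dots,\mathsf{X}_{:r}$, set $|\mathrm{columns}(\mathsf{X})\rangle=\mathcal{C}(\mathsf{X}_{:1})\cdots\mathcal{C}(\mathsf{X}_{:r})|\emptyset\rangle$. The associated random subset $Y\subseteq\{1,\dots,n\}$ has law $\mathbb{P}(Y=\mathtt{C})=|\langle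 e_{\mathtt{C}}|\mathrm{columns}(\mathsf{X})\rangle|^2$, where $|e_{\mathtt{C}}\rangle=|b_1\dots b_n\rangle$ with $b_i=1$ iff $i\in\mathtt{C}$. This is the Born-rule outcome of measuring the occupation numbers $N_i=c_i^*c_i$. For $\mathtt{C}$ with $|\mathtt{C}|=r$, $\mathsf{X}_{\mathtt{C}:}$ is the $r\times r$ submatrix of $\mathsf{X}$ with rows indexed by $\mathtt{C}$. *)

theory Defs
  imports "Jordan_Normal_Form.Schur_Decomposition" "Jordan_Normal_Form.DL_Submatrix"
begin

text \<open>Kronecker (tensor) product of matrices, with the standard index convention:
  the left factor carries the most significant index.\<close>
definition kron :: "'a::times mat \<Rightarrow> 'a mat \<Rightarrow> 'a mat" where
  "kron A B = mat (dim_row A * dim_row B) (dim_col A * dim_col B)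
     (\<lambda>(i,j). A $$ (i div dim_row B, j div dim_col B) * B $$ (i mod dim_row B, j mod dim_col B))"

fun kron_list :: "'a::{times,zero,one} mat list \<Rightarrow> 'a mat" where
  "kron_list [] = 1\<^sub>m 1"
| "kron_list (A # As) = kron A (kron_list As)"

definition ket0 :: "complex mat" where "ket0 = mat_of_cols_list 2 [[1, 0]]"
definition ket1 :: "complex mat" where "ket1 = mat_of_cols_list 2 [[0, 1]]"
definition sigma_z :: "complex mat" where "sigma_z = mat_of_rows_list 2 [[1, 0], [0, -1]]"
definition id2 :: "complex mat" where "id2 = 1\<^sub>m 2"

text \<open>Annihilation operator c_j (qubits indexed 0..n-1 here; paper's c_{j+1}).\<close>
definition ann :: "nat \<Rightarrow> nat \<Rightarrow> complex mat" where
  "ann n j = kron_list (replicate j sigma_z @ [ket0 * mat_adjoint ket1] @ replicate (n - j - 1) id2)"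

definition basis_ket :: "nat \<Rightarrow> nat set \<Rightarrow> complex mat" where
  "basis_ket n C = kron_list (map (\<lambda>i. if i \<in> C then ket1 else ket0) [0..<n])"

definition vacuum :: "nat \<Rightarrow> complex mat" where "vacuum n = basis_ket n {}"

definition clifford_loader :: "nat \<Rightarrow> (nat \<Rightarrow> real) \<Rightarrow> complex mat" where
  "clifford_loader n x = foldr (\<lambda>i M. complex_of_real (x i) \<cdot>\<^sub>m (ann n i + mat_adjoint (ann n i)) + M)
      [0..<n] (0\<^sub>m (2 ^ n) (2 ^ n))"

definition columns_state :: "real mat \<Rightarrow> complex mat" where
  "columns_state X = foldr (\<lambda>k v. clifford_loader (dim_row X) (\<lambda>i. X $$ (i, k)) * v)
      [0..<dim_col X] (vacuum (dim_row X))"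

text \<open>Born rule: P(Y = C) = |<e_C|columns(X)>|^2.\<close>
definition prob_Y :: "real mat \<Rightarrow> nat set \<Rightarrow> real" where
  "prob_Y X C = (cmod ((mat_adjoint (basis_ket (dim_row X) C) * columns_state X) $$ (0,0)))\<^sup>2"

definition prob_card_Y :: "real mat \<Rightarrow> nat \<Rightarrow> real" where
  "prob_card_Y X r = (\<Sum>C \<in> {C. C \<subseteq> {0..<dim_row X} \<and> card C = r}. prob_Y X C)"

definition cond_prob_Y :: "real mat \<Rightarrow> nat set \<Rightarrow> nat \<Rightarrow> real" where
  "cond_prob_Y X C r = (if card C = r then prob_Y X C else 0) / prob_card_Y X r"

end

theory Submission
  imports Defs
begin


lemma sum_div_mod:
  fixes b d :: nat
  shows "(\<Sum>k<b*d. g (k div d) (k mod d)) = (\<Sum>p<b. \<Sum>q<d. (g p q :: 'a :: comm_monoid_add))"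
proof -
  have "(\<Sum>p<b. \<Sum>q<d. g p q) = (\<Sum>(p,q)\<in>{..<b}\<times>{..<d}. g p q)"
    by (simp add: sum.cartesian_product)
  also have "\<dots> = (\<Sum>k<b*d. g (k div d) (k mod d))"
  proof (rule sum.reindex_bij_witness[where i="\<lambda>k. (k div d, k mod d)" and j="\<lambda>(p,q). p*d+q"])
    fix a assume a: "a \<in> {..<b*d}"
    then have d: "d > 0" by (cases d, auto)
    show "(a div d, a mod d) \<in> {..<b} \<times> {..<d}" using a d
      by (auto simp: less_mult_imp_div_less)
    show "(case (a div d, a mod d) of (p, q) \<Rightarrow> p * d + q) = a" by simp
  next
    fix x assume x: "x \<in> {..<b} \<times> {..<d}"
    then obtain p q where pq: "x = (p,q)" "p < b" "q < d" by auto
    have "p * d + q < b * d"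
    proof -
      have "p * d + q < p * d + d" using pq by simp
      also have "\<dots> = Suc p * d" by simp
      also have "\<dots> \<le> b * d" using pq by (intro mult_le_mono1) simp
      finally show ?thesis .
    qed
    then show "(case x of (p, q) \<Rightarrow> p * d + q) \<in> {..<b * d}" using pq by simp
    show "((case x of (p, q) \<Rightarrow> p * d + q) div d, (case x of (p, q) \<Rightarrow> p * d + q) mod d) = x"
      using pq by simp
    show "g ((case x of (p, q) \<Rightarrow> p * d + q) div d) ((case x of (p, q) \<Rightarrow> p * d + q) mod d) = (case x of (p, q) \<Rightarrow> g p q)"
      using pq by simp
  qed
  finally show ?thesis by simp
qed

lemma kron_carrier: "kron A B \<in> carrier_mat (dim_row A * dim_row B) (dim_col A * dim_col B)"
  unfolding kron_def by simp

lemma kron_dims[simp]: "dim_row (kron A B) = dim_row A * dim_row B"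
  "dim_col (kron A B) = dim_col A * dim_col B"
  unfolding kron_def by simp_all

lemma kron_index: "i < dim_row A * dim_row B \<Longrightarrow> j < dim_col A * dim_col B \<Longrightarrow>
  kron A B $$ (i,j) = A $$ (i div dim_row B, j div dim_col B) * B $$ (i mod dim_row B, j mod dim_col B)"
  unfolding kron_def by simp

lemma div_lt_aux: "(i::nat) < a * c \<Longrightarrow> i div c < a"
  by (simp add: less_mult_imp_div_less)
lemma mod_lt_aux: "(i::nat) < a * c \<Longrightarrow> i mod c < c"
  by (cases c, auto)

lemma kron_mult:
  fixes A :: "'a :: comm_semiring_0 mat"
  assumes A: "A \<in> carrier_mat a b" and B: "B \<in> carrier_mat c d"
    and C: "C \<in> carrier_mat b e" and D: "D \<in> carrier_mat d f"
  shows "kron A B * kron C D = kron (A * C) (B * D)"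
proof (rule eq_matI)
  show "dim_row (kron A B * kron C D) = dim_row (kron (A * C) (B * D))"
    "dim_col (kron A B * kron C D) = dim_col (kron (A * C) (B * D))"
    using A B C D by auto
  fix i j assume i: "i < dim_row (kron (A * C) (B * D))" and j: "j < dim_col (kron (A * C) (B * D))"
  then have i': "i < a * c" and j': "j < e * f" using A B C D by auto
  have "(kron A B * kron C D) $$ (i,j) = (\<Sum>k<b*d. kron A B $$ (i,k) * kron C D $$ (k,j))"
    using A B C D i' j' by (simp add: scalar_prod_def lessThan_atLeast0 ac_simps)
  also have "\<dots> = (\<Sum>k<b*d. A $$ (i div c, k div d) * B $$ (i mod c, k mod d) *
       (C $$ (k div d, j div f) * D $$ (k mod d, j mod f)))"
    by (rule sum.cong, simp, subst kron_index, insert A B C D i' j', auto,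
        subst kron_index, auto)
  also have "\<dots> = (\<Sum>p<b. \<Sum>q<d. A $$ (i div c, p) * B $$ (i mod c, q) *
       (C $$ (p, j div f) * D $$ (q, j mod f)))"
    by (rule sum_div_mod)
  also have "\<dots> = (\<Sum>p<b. A $$ (i div c, p) * C $$ (p, j div f)) * (\<Sum>q<d. B $$ (i mod c, q) * D $$ (q, j mod f))"
    by (simp add: sum_product ac_simps)
  also have "\<dots> = kron (A * C) (B * D) $$ (i,j)"
    using A B C D i' j' div_lt_aux[OF i'] mod_lt_aux[OF i'] div_lt_aux[OF j'] mod_lt_aux[OF j']
    by (subst kron_index, auto simp: scalar_prod_def lessThan_atLeast0)
  finally show "(kron A B * kron C D) $$ (i,j) = kron (A * C) (B * D) $$ (i,j)" .
qed


lemma kron_smult_left: "kron (a \<cdot>\<^sub>m A) B = a \<cdot>\<^sub>m kron A (B :: 'a :: comm_ring mat)"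
  by (rule eq_matI, auto simp: kron_index div_lt_aux mod_lt_aux ac_simps)

lemma kron_smult_right: "kron A (b \<cdot>\<^sub>m B) = b \<cdot>\<^sub>m kron A (B :: 'a :: comm_ring mat)"
  by (rule eq_matI, auto simp: kron_index div_lt_aux mod_lt_aux ac_simps)

lemma mat_adjoint_alt: "mat_adjoint (A :: complex mat) = mat (dim_col A) (dim_row A) (\<lambda>(i,j). cnj (A $$ (j,i)))"
  unfolding mat_adjoint_def by (rule eq_matI, auto simp: mat_of_rows_index)

lemma mat_adjoint_dims[simp]: "dim_row (mat_adjoint A) = dim_col A" "dim_col (mat_adjoint A) = dim_row A"
  unfolding mat_adjoint_def by auto

lemma mat_adjoint_index: "i < dim_col A \<Longrightarrow> j < dim_row A \<Longrightarrow> mat_adjoint (A :: complex mat) $$ (i,j) = cnj (A $$ (j,i))"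
  unfolding mat_adjoint_alt by simp

lemma mat_adjoint_adjoint[simp]: "mat_adjoint (mat_adjoint (A :: complex mat)) = A"
  by (rule eq_matI, auto simp: mat_adjoint_index)

lemma kron_adjoint: "mat_adjoint (kron A B) = kron (mat_adjoint A) (mat_adjoint (B :: complex mat))"
  by (rule eq_matI, auto simp: kron_index mat_adjoint_index div_lt_aux mod_lt_aux)

lemma adjoint_smult: "mat_adjoint (a \<cdot>\<^sub>m A) = cnj a \<cdot>\<^sub>m mat_adjoint (A :: complex mat)"
  by (rule eq_matI, auto simp: mat_adjoint_index)

lemma kron_one: "kron (1\<^sub>m 1) (1\<^sub>m 1) = (1\<^sub>m 1 :: 'a :: {comm_ring_1} mat)"
  by (rule eq_matI, auto simp: kron_index)

lemma kron_list_carrier: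
  assumes "\<forall>t \<in> set ts. F t \<in> carrier_mat a b"
  shows "kron_list (map F ts) \<in> carrier_mat (a ^ length ts) (b ^ length ts)"
  using assms by (induction ts, auto simp: kron_def)

lemma kron_list_mult:
  fixes F :: "'b \<Rightarrow> 'a :: comm_ring_1 mat"
  assumes "\<forall>t \<in> set ts. F t \<in> carrier_mat a b" "\<forall>t \<in> set ts. G t \<in> carrier_mat b c"
  shows "kron_list (map F ts) * kron_list (map G ts) = kron_list (map (\<lambda>t. F t * G t) ts)"
  using assms
proof (induction ts)
  case Nil
  then show ?case by simp
next
  case (Cons t ts)
  have F: "F t \<in> carrier_mat a b" and G: "G t \<in> carrier_mat b c" using Cons.prems by auto
  have "kron (F t) (kron_list (map F ts)) * kron (G t) (kron_list (map G ts)) =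
     kron (F t * G t) (kron_list (map F ts) * kron_list (map G ts))"
    by (rule kron_mult[OF F kron_list_carrier G kron_list_carrier], insert Cons.prems, auto)
  then show ?case using Cons by simp
qed

lemma kron_list_adjoint:
  "mat_adjoint (kron_list (map F ts)) = kron_list (map (\<lambda>t. mat_adjoint (F t :: complex mat)) ts)"
proof (induction ts)
  case Nil
  have "mat_adjoint (1\<^sub>m 1 :: complex mat) = 1\<^sub>m 1" by (rule eq_matI, auto simp: mat_adjoint_index)
  then show ?case by simp
next
  case (Cons t ts)
  then show ?case by (simp add: kron_adjoint)
qed

lemma smult_smult_m: "a \<cdot>\<^sub>m (b \<cdot>\<^sub>m A) = (a * b :: 'a :: semigroup_mult) \<cdot>\<^sub>m A"
  by (rule eq_matI, auto simp: mult.assoc)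

lemma kron_list_smult:
  "kron_list (map (\<lambda>t. c t \<cdot>\<^sub>m F t) ts) = prod_list (map c ts) \<cdot>\<^sub>m kron_list (map F ts :: 'a :: comm_ring_1 mat list)"
proof (induction ts)
  case Nil
  then show ?case by (auto intro!: eq_matI)
next
  case (Cons t ts)
  then show ?case by (simp add: kron_smult_left kron_smult_right smult_smult_m mult.commute)
qed

lemma kron_list_ones: "kron_list (map (\<lambda>t. 1\<^sub>m 1) ts) = (1\<^sub>m 1 :: 'a :: comm_ring_1 mat)"
  by (induction ts, auto intro!: eq_matI simp: kron_index)


definition kt :: "bool \<Rightarrow> complex mat" where "kt b = (if b then ket1 else ket0)"
definition Pm :: "complex mat" where "Pm = ket0 * mat_adjoint ket1"

lemma sum2: "(\<Sum>i::nat = 0..<2. f i) = f 0 + (f 1 :: 'a :: comm_monoid_add)"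
  by (simp add: numeral_2_eq_2)

lemma ket0_alt: "ket0 = mat 2 1 (\<lambda>(i,j). if i = 0 then 1 else 0)"
  unfolding ket0_def mat_of_cols_list_def by (rule eq_matI, auto simp: less_2_cases_iff)
lemma ket1_alt: "ket1 = mat 2 1 (\<lambda>(i,j). if i = 1 then 1 else 0)"
  unfolding ket1_def mat_of_cols_list_def by (rule eq_matI, auto simp: less_2_cases_iff)
lemma kt_alt: "kt b = mat 2 1 (\<lambda>(i,j). if i = (if b then 1 else 0) then 1 else 0)"
  unfolding kt_def ket0_alt ket1_alt by auto
lemma sigma_z_alt: "sigma_z = mat 2 2 (\<lambda>(i,j). if i = j then (if i = 0 then 1 else -1) else 0)"
  unfolding sigma_z_def mat_of_rows_list_def by (rule eq_matI, auto simp: less_2_cases_iff)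
lemma id2_alt: "id2 = mat 2 2 (\<lambda>(i,j). if i = j then 1 else 0)"
  unfolding id2_def by (rule eq_matI, auto)
lemma Pm_alt: "Pm = mat 2 2 (\<lambda>(i,j). if i = 0 \<and> j = 1 then 1 else 0)"
  unfolding Pm_def ket0_alt ket1_alt
  by (rule eq_matI, auto simp: less_2_cases_iff mat_adjoint_index scalar_prod_def)

lemma kt_carrier[simp]: "kt b \<in> carrier_mat 2 1" unfolding kt_alt by auto
lemma sigma_z_carrier[simp]: "sigma_z \<in> carrier_mat 2 2" unfolding sigma_z_alt by auto
lemma id2_carrier[simp]: "id2 \<in> carrier_mat 2 2" unfolding id2_alt by auto
lemma Pm_carrier[simp]: "Pm \<in> carrier_mat 2 2" unfolding Pm_alt by auto

lemma sz_kt: "sigma_z * kt b = (if b then -1 else 1) \<cdot>\<^sub>m kt b"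
  unfolding sigma_z_alt kt_alt
  by (rule eq_matI, auto simp: less_2_cases_iff scalar_prod_def sum2)
lemma id2_kt: "id2 * kt b = 1 \<cdot>\<^sub>m kt b"
  unfolding id2_alt kt_alt
  by (rule eq_matI, auto simp: less_2_cases_iff scalar_prod_def sum2)
lemma Pm_kt: "Pm * kt b = (if b then 1 else 0) \<cdot>\<^sub>m kt False"
  unfolding Pm_alt kt_alt
  by (rule eq_matI, auto simp: less_2_cases_iff scalar_prod_def sum2)
lemma sz_adj: "mat_adjoint sigma_z = sigma_z"
  unfolding sigma_z_alt
  by (rule eq_matI, auto simp: less_2_cases_iff mat_adjoint_index)
lemma id2_adj: "mat_adjoint id2 = id2"
  unfolding id2_alt
  by (rule eq_matI, auto simp: less_2_cases_iff mat_adjoint_index)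
lemma Pm_adj_alt: "mat_adjoint Pm = mat 2 2 (\<lambda>(i,j). if i = 1 \<and> j = 0 then 1 else 0)"
  unfolding Pm_alt
  by (rule eq_matI, auto simp: less_2_cases_iff mat_adjoint_index)
lemma kt_adj_alt: "mat_adjoint (kt b) = mat 1 2 (\<lambda>(i,j). if j = (if b then 1 else 0) then 1 else 0)"
  unfolding kt_alt mat_adjoint_alt
  by (rule eq_matI, auto simp: less_2_cases_iff)
lemma Pm_adj_kt: "mat_adjoint Pm * kt b = (if b then 0 else 1) \<cdot>\<^sub>m kt True"
  unfolding Pm_adj_alt kt_alt
  by (rule eq_matI, auto simp: less_2_cases_iff scalar_prod_def sum2)
lemma kt_ip: "mat_adjoint (kt a) * kt b = (if a = b then 1 else 0) \<cdot>\<^sub>m 1\<^sub>m 1"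
  unfolding kt_adj_alt unfolding kt_alt
  by (rule eq_matI, cases a; cases b; simp add: scalar_prod_def sum2)


lemma kt_carrier'[simp]: "kt b \<in> carrier_mat 2 (Suc 0)" using kt_carrier by simp
lemma adj_carrier: "A \<in> carrier_mat a b \<Longrightarrow> mat_adjoint A \<in> carrier_mat b a" by auto

lemma prod_list_upt: "prod_list (map f [0..<n]) = prod f {0..<n}"
  by (induction n) auto

definition sg :: "nat set \<Rightarrow> nat \<Rightarrow> complex" where
  "sg S j = (-1) ^ card {t\<in>S. t < j}"

definition annF :: "nat \<Rightarrow> nat \<Rightarrow> complex mat" where
  "annF j t = (if t < j then sigma_z else if t = j then Pm else id2)"

lemma annF_carrier: "annF j t \<in> carrier_mat 2 2"
  unfolding annF_def by auto

lemma ann_alt: assumes "j < n" shows "ann n j = kron_list (map (annF j) [0..<n])"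
proof -
  have "replicate j sigma_z @ [ket0 * mat_adjoint ket1] @ replicate (n - j - 1) id2 = map (annF j) [0..<n]"
    by (rule nth_equalityI, insert assms, auto simp: nth_append annF_def Pm_def)
  then show ?thesis unfolding ann_def by simp
qed

lemma basis_alt: "basis_ket n S = kron_list (map (\<lambda>t. kt (t \<in> S)) [0..<n])"
  unfolding basis_ket_def kt_def by simp

lemma basis_carrier: "basis_ket n S \<in> carrier_mat (2^n) 1"
  unfolding basis_alt using kron_list_carrier[of "[0..<n]" "\<lambda>t. kt (t \<in> S)" 2 1] by auto

lemma ann_carrier: "j < n \<Longrightarrow> ann n j \<in> carrier_mat (2^n) (2^n)"
  unfolding ann_alt using kron_list_carrier[of "[0..<n]" "annF j" 2 2] annF_carrier by simp

lemma prod_sign: "(\<Prod>t\<in>{0..<j}. if t \<in> S then -1 else 1) = sg S j"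
proof -
  have "(\<Prod>t\<in>{0..<j}. if t \<in> S then -1 else (1::complex)) = (\<Prod>t\<in>{0..<j} \<inter> {t. t \<in> S}. -1)"
    by (subst prod.If_cases, auto)
  also have "\<dots> = (-1) ^ card ({0..<j} \<inter> {t. t \<in> S})" by simp
  also have "{0..<j} \<inter> {t. t \<in> S} = {t\<in>S. t < j}" by auto
  finally show ?thesis unfolding sg_def .
qed

lemma prod_split_j:
  fixes j n :: nat
  assumes "j < n" "\<And>t. t > j \<Longrightarrow> t < n \<Longrightarrow> c t = 1"
  shows "prod c {0..<n} = prod c {0..<j} * c j"
proof -
  have "{0..<n} = {0..<j} \<union> {j} \<union> {j<..<n}" using assms by auto
  have "prod c {0..<n} = prod c {0..<j} * c j * prod c {j<..<n}"
  proof -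
    have d: "{0..<j} \<inter> {j<..<n} = {}" by auto
    show ?thesis using \<open>{0..<n} = _\<close> by (simp add: prod.union_disjoint[OF _ _ d] ac_simps)
  qed
  moreover have "prod c {j<..<n} = 1" using assms by (intro prod.neutral) auto
  ultimately show ?thesis by simp
qed

lemma ann_basis:
  assumes j: "j < n"
  shows "ann n j * basis_ket n S = (if j \<in> S then sg S j else 0) \<cdot>\<^sub>m basis_ket n (S - {j})"
proof -
  define c where "c t = (if t < j then (if t \<in> S then -1 else 1) else if t = j then (if j \<in> S then 1 else 0) else (1::complex))" for t
  have "ann n j * basis_ket n S = kron_list (map (\<lambda>t. annF j t * kt (t \<in> S)) [0..<n])"
    unfolding ann_alt[OF j] basis_alt
    by (rule kron_list_mult[where a=2 and b=2 and c=1], auto simp: annF_carrier)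
  also have "map (\<lambda>t. annF j t * kt (t \<in> S)) [0..<n] = map (\<lambda>t. c t \<cdot>\<^sub>m kt (t \<in> S - {j})) [0..<n]"
    by (rule map_cong, simp, auto simp: annF_def c_def sz_kt Pm_kt id2_kt)
  also have "kron_list \<dots> = prod c {0..<n} \<cdot>\<^sub>m basis_ket n (S - {j})"
    unfolding kron_list_smult basis_alt prod_list_upt ..
  also have "prod c {0..<n} = prod c {0..<j} * c j"
    by (rule prod_split_j[OF j], auto simp: c_def)
  also have "prod c {0..<j} = sg S j"
    unfolding prod_sign[symmetric] by (rule prod.cong, auto simp: c_def)
  finally show ?thesis by (simp add: c_def)
qed

lemma ann_adj_basis:
  assumes j: "j < n"
  shows "mat_adjoint (ann n j) * basis_ket n S = (if j \<notin> S then sg S j else 0) \<cdot>\<^sub>m basis_ket n (insert j S)"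
proof -
  define c where "c t = (if t < j then (if t \<in> S then -1 else 1) else if t = j then (if j \<in> S then 0 else 1) else (1::complex))" for t
  have "mat_adjoint (ann n j) * basis_ket n S = kron_list (map (\<lambda>t. mat_adjoint (annF j t) * kt (t \<in> S)) [0..<n])"
    unfolding ann_alt[OF j] basis_alt kron_list_adjoint
    by (rule kron_list_mult[where a=2 and b=2 and c=1], auto simp: annF_carrier adj_carrier)
  also have "map (\<lambda>t. mat_adjoint (annF j t) * kt (t \<in> S)) [0..<n] = map (\<lambda>t. c t \<cdot>\<^sub>m kt (t \<in> insert j S)) [0..<n]"
    by (rule map_cong, simp, auto simp: annF_def c_def sz_kt Pm_adj_kt id2_kt sz_adj id2_adj)
  also have "kron_list \<dots> = prod c {0..<n} \<cdot>\<^sub>m basis_ket n (insert j S)"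
    unfolding kron_list_smult basis_alt prod_list_upt ..
  also have "prod c {0..<n} = prod c {0..<j} * c j"
    by (rule prod_split_j[OF j], auto simp: c_def)
  also have "prod c {0..<j} = sg S j"
    unfolding prod_sign[symmetric] by (rule prod.cong, auto simp: c_def)
  finally show ?thesis by (simp add: c_def)
qed

lemma basis_ip:
  assumes "S \<subseteq> {0..<n}" "T \<subseteq> {0..<n}"
  shows "mat_adjoint (basis_ket n S) * basis_ket n T = (if S = T then 1 else 0) \<cdot>\<^sub>m 1\<^sub>m 1"
proof -
  define c where "c t = (if (t \<in> S) = (t \<in> T) then 1 else (0::complex))" for t
  have "mat_adjoint (basis_ket n S) * basis_ket n T = kron_list (map (\<lambda>t. mat_adjoint (kt (t \<in> S)) * kt (t \<in> T)) [0..<n])"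
    unfolding basis_alt kron_list_adjoint
    by (rule kron_list_mult[where a=1 and b=2 and c=1], auto simp: kt_adj_alt)
  also have "map (\<lambda>t. mat_adjoint (kt (t \<in> S)) * kt (t \<in> T)) [0..<n] = map (\<lambda>t. c t \<cdot>\<^sub>m 1\<^sub>m 1) [0..<n]"
    by (rule map_cong, simp, auto simp: kt_ip c_def)
  also have "kron_list \<dots> = prod c {0..<n} \<cdot>\<^sub>m 1\<^sub>m 1"
    unfolding kron_list_smult kron_list_ones prod_list_upt ..
  also have "prod c {0..<n} = (if S = T then 1 else 0)"
  proof (cases "S = T")
    case True then show ?thesis by (simp add: c_def)
  next
    case False
    then obtain t where "t \<in> S \<and> t \<notin> T \<or> t \<in> T \<and> t \<notin> S" by blast
    then have t: "t \<in> {0..<n}" "c t = 0" using assms by (auto simp: c_def)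
    then show ?thesis using False by (simp add: prod_zero_iff) (metis t)
  qed
  finally show ?thesis .
qed


lemma pick_image: assumes "finite S" shows "pick S ` {..<card S} = S"
proof
  show "pick S ` {..<card S} \<subseteq> S" using pick_in_set_le by auto
  show "S \<subseteq> pick S ` {..<card S}"
  proof
    fix j assume j: "j \<in> S"
    have "{a\<in>S. a < j} \<subset> S" using j by auto
    then have c: "card {a\<in>S. a < j} < card S" using assms by (rule psubset_card_mono[rotated])
    have p: "j = pick S (card {a\<in>S. a < j})" using j by (rule pick_card_in_set[symmetric])
    show "j \<in> pick S ` {..<card S}" by (rule image_eqI[where f="pick S" and x="card {a\<in>S. a < j}", OF p], insert c, simp)
  qed
qed

lemma pick_inj: "inj_on (pick S) {..<card S}"
proof (rule inj_onI)
  fix a b assume a: "a \<in> {..<card S}" and b: "b \<in> {..<card S}" and e: "pick S a = pick S b"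
  show "a = b"
  proof (rule ccontr)
    assume "a \<noteq> b"
    then consider "a < b" | "b < a" by linarith
    then show False
      using pick_mono_le[of b S a] pick_mono_le[of a S b] a b e by (cases, auto)
  qed
qed

lemma pick_delete:
  assumes fin: "finite S" and i: "i < card S" and a: "a < card S - 1"
  shows "pick (S - {pick S i}) a = pick S (if a < i then a else Suc a)"
proof -
  define p where "p = pick S i"
  define b where "b = (if a < i then a else Suc a)"
  define y where "y = pick S b"
  have b: "b < card S" using a i unfolding b_def by auto
  have yS: "y \<in> S" unfolding y_def using b by (rule pick_in_set_le)
  have bi: "b \<noteq> i" unfolding b_def by auto
  have yp: "y \<noteq> p" using pick_inj[of S] bi b i unfolding y_def p_def inj_on_def by auto
  have cy: "card {t\<in>S. t < y} = b" unfolding y_def using b by (rule card_pick_le)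
  have "card {t\<in>S - {p}. t < y} = a"
  proof (cases "a < i")
    case True
    then have "y < p" unfolding y_def p_def b_def using pick_mono_le[OF i True] by simp
    then have "{t\<in>S - {p}. t < y} = {t\<in>S. t < y}" by auto
    then show ?thesis using cy True unfolding b_def by simp
  next
    case False
    then have "p < y" unfolding y_def p_def b_def using pick_mono_le[OF b] False by (simp add: b_def)
    then have "{t\<in>S - {p}. t < y} = {t\<in>S. t < y} - {p}" by auto
    moreover have "p \<in> {t\<in>S. t < y}" using \<open>p < y\<close> pick_in_set_le[OF i] unfolding p_def by auto
    moreover have "finite {t\<in>S. t < y}" using fin by auto
    ultimately show ?thesis using cy False unfolding b_def by simp
  qed
  then have "pick (S - {p}) a = pick (S - {p}) (card {t\<in>S - {p}. t < y})" by simp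
  also have "\<dots> = y" using yS yp by (intro pick_card_in_set) auto
  finally show ?thesis unfolding y_def b_def p_def .
qed

definition Mk :: "real mat \<Rightarrow> nat \<Rightarrow> nat \<Rightarrow> nat set \<Rightarrow> real mat" where
  "Mk X r k S = mat (card S) (r - k) (\<lambda>(i,l). X $$ (pick S i, k + l))"

lemma laplace_Mk:
  assumes fin: "finite S" and k: "k < r" and c: "card S = r - k"
  shows "det (Mk X r k S) = (\<Sum>j\<in>S. X $$ (j,k) * (-1) ^ card {t\<in>S. t < j} * det (Mk X r (Suc k) (S - {j})))"
proof -
  define m where "m = card S"
  have m: "m = r - k" "m > 0" using c k unfolding m_def by auto
  have A: "Mk X r k S \<in> carrier_mat m m" unfolding Mk_def m_def using c by auto
  have "det (Mk X r k S) = (\<Sum>i<m. Mk X r k S $$ (i,0) * cofactor (Mk X r k S) i 0)"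
    by (rule laplace_expansion_column[OF A], insert m, auto)
  also have "\<dots> = (\<Sum>i<m. X $$ (pick S i, k) * (-1) ^ i * det (Mk X r (Suc k) (S - {pick S i})))"
  proof (rule sum.cong[OF refl])
    fix i assume i: "i \<in> {..<m}"
    then have i': "i < card S" unfolding m_def by auto
    have pS: "pick S i \<in> S" using i' by (rule pick_in_set_le)
    have cd: "card (S - {pick S i}) = m - 1" using pS fin unfolding m_def by simp
    have "mat_delete (Mk X r k S) i 0 = Mk X r (Suc k) (S - {pick S i})"
    proof (rule eq_matI)
      show "dim_row (mat_delete (Mk X r k S) i 0) = dim_row (Mk X r (Suc k) (S - {pick S i}))"
        using cd A unfolding Mk_def m_def by simp
      show "dim_col (mat_delete (Mk X r k S) i 0) = dim_col (Mk X r (Suc k) (S - {pick S i}))"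
        using cd A m unfolding Mk_def by simp
      fix a b assume a: "a < dim_row (Mk X r (Suc k) (S - {pick S i}))" and b: "b < dim_col (Mk X r (Suc k) (S - {pick S i}))"
      then have a': "a < m - 1" and b': "b < m - 1" using cd m unfolding Mk_def by auto
      show "mat_delete (Mk X r k S) i 0 $$ (a, b) = Mk X r (Suc k) (S - {pick S i}) $$ (a, b)"
        using a' b' m cd pick_delete[OF fin i', of a] unfolding mat_delete_def Mk_def m_def
        by (auto simp del: pick.simps)
    qed
    then show "Mk X r k S $$ (i,0) * cofactor (Mk X r k S) i 0 = X $$ (pick S i, k) * (-1) ^ i * det (Mk X r (Suc k) (S - {pick S i}))"
      unfolding cofactor_def using i m unfolding Mk_def m_def by auto
  qed
  also have "\<dots> = (\<Sum>i<card S. (\<lambda>j. X $$ (j,k) * (-1) ^ card {t\<in>S. t < j} * det (Mk X r (Suc k) (S - {j}))) (pick S i))"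
    unfolding m_def by (rule sum.cong, simp, simp add: card_pick_le)
  also have "\<dots> = (\<Sum>j\<in>S. X $$ (j,k) * (-1) ^ card {t\<in>S. t < j} * det (Mk X r (Suc k) (S - {j})))"
    using sum.reindex[OF pick_inj[of S], of "\<lambda>j. X $$ (j,k) * (-1) ^ card {t\<in>S. t < j} * det (Mk X r (Suc k) (S - {j}))"]
    unfolding pick_image[OF fin] by (simp add: o_def)
  finally show ?thesis .
qed


definition amp :: "nat \<Rightarrow> complex mat \<Rightarrow> nat set \<Rightarrow> complex" where
  "amp n v S = (mat_adjoint (basis_ket n S) * v) $$ (0,0)"

lemma sum_list_upt: "sum_list (map f [0..<n]) = sum f {..<n}"
  by (induction n) auto

lemma ip_adj:
  fixes A :: "complex mat"
  assumes w: "w \<in> carrier_mat N 1" and A: "A \<in> carrier_mat N N" and v: "v \<in> carrier_mat N 1"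
  shows "(mat_adjoint w * (A * v)) $$ (0,0) = (mat_adjoint (mat_adjoint A * w) * v) $$ (0,0)"
proof -
  have "(mat_adjoint w * (A * v)) $$ (0,0) = (\<Sum>k<N. cnj (w $$ (k,0)) * (\<Sum>l<N. A $$ (k,l) * v $$ (l,0)))"
    using w A v by (simp add: scalar_prod_def mat_adjoint_index lessThan_atLeast0)
  also have "\<dots> = (\<Sum>k<N. \<Sum>l<N. cnj (w $$ (k,0)) * A $$ (k,l) * v $$ (l,0))"
    by (simp add: sum_distrib_left mult.assoc)
  also have "\<dots> = (\<Sum>l<N. \<Sum>k<N. cnj (w $$ (k,0)) * A $$ (k,l) * v $$ (l,0))"
    by (rule sum.swap)
  also have "\<dots> = (\<Sum>l<N. cnj (\<Sum>k<N. cnj (A $$ (k,l)) * w $$ (k,0)) * v $$ (l,0))"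
    by (simp add: sum_distrib_right sum_distrib_left cnj_sum ac_simps)
  also have "\<dots> = (mat_adjoint (mat_adjoint A * w) * v) $$ (0,0)"
    using w A v by (simp add: scalar_prod_def mat_adjoint_index lessThan_atLeast0)
  finally show ?thesis .
qed

lemma smult_ip:
  fixes w :: "complex mat"
  assumes w: "w \<in> carrier_mat N 1" and v: "v \<in> carrier_mat N 1"
  shows "(mat_adjoint (a \<cdot>\<^sub>m w) * v) $$ (0,0) = cnj a * (mat_adjoint w * v) $$ (0,0)"
  unfolding adjoint_smult using w v by (subst mult_smult_assoc_mat[of _ 1 N _ 1], auto)

lemma foldr_ip:
  fixes B :: "nat \<Rightarrow> complex mat"
  assumes B: "\<forall>i\<in>set is. B i \<in> carrier_mat N N" and w: "w \<in> carrier_mat N 1" and v: "v \<in> carrier_mat N 1"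
  shows "foldr (\<lambda>i M. a i \<cdot>\<^sub>m B i + M) is (0\<^sub>m N N) \<in> carrier_mat N N \<and>
    (mat_adjoint w * (foldr (\<lambda>i M. a i \<cdot>\<^sub>m B i + M) is (0\<^sub>m N N) * v)) $$ (0,0) =
     (\<Sum>i\<leftarrow>is. a i * (mat_adjoint w * (B i * v)) $$ (0,0))"
  using B
proof (induction "is")
  case Nil
  have "(mat_adjoint w * (0\<^sub>m N N * v)) = 0\<^sub>m 1 1" using w v by auto
  then show ?case by simp
next
  case (Cons i "is")
  let ?F = "foldr (\<lambda>i M. a i \<cdot>\<^sub>m B i + M) is (0\<^sub>m N N)"
  have Bi: "B i \<in> carrier_mat N N" and F: "?F \<in> carrier_mat N N" using Cons by auto
  have IH: "(mat_adjoint w * (?F * v)) $$ (0,0) = (\<Sum>i\<leftarrow>is. a i * (mat_adjoint w * (B i * v)) $$ (0,0))"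
    using Cons by auto
  have aw: "mat_adjoint w \<in> carrier_mat 1 N" using w by auto
  have "(a i \<cdot>\<^sub>m B i + ?F) * v = a i \<cdot>\<^sub>m (B i * v) + ?F * v"
  proof -
    have "(a i \<cdot>\<^sub>m B i + ?F) * v = (a i \<cdot>\<^sub>m B i) * v + ?F * v"
      by (rule add_mult_distrib_mat[of _ N N], insert Bi F v, auto)
    also have "(a i \<cdot>\<^sub>m B i) * v = a i \<cdot>\<^sub>m (B i * v)"
      by (rule mult_smult_assoc_mat[OF Bi v])
    finally show ?thesis .
  qed
  then have "mat_adjoint w * ((a i \<cdot>\<^sub>m B i + ?F) * v) = a i \<cdot>\<^sub>m (mat_adjoint w * (B i * v)) + mat_adjoint w * (?F * v)"
  proof -
    have Bv: "B i * v \<in> carrier_mat N 1" "?F * v \<in> carrier_mat N 1" using Bi F v by auto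
    have "mat_adjoint w * (a i \<cdot>\<^sub>m (B i * v) + ?F * v) = mat_adjoint w * (a i \<cdot>\<^sub>m (B i * v)) + mat_adjoint w * (?F * v)"
      by (rule mult_add_distrib_mat[OF aw], insert Bv, auto)
    also have "mat_adjoint w * (a i \<cdot>\<^sub>m (B i * v)) = a i \<cdot>\<^sub>m (mat_adjoint w * (B i * v))"
      by (rule mult_smult_distrib[OF aw Bv(1)])
    finally show ?thesis using \<open>(a i \<cdot>\<^sub>m B i + ?F) * v = _\<close> by simp
  qed
  then have "(mat_adjoint w * ((a i \<cdot>\<^sub>m B i + ?F) * v)) $$ (0,0) =
     a i * (mat_adjoint w * (B i * v)) $$ (0,0) + (mat_adjoint w * (?F * v)) $$ (0,0)"
    using Bi F v aw w by (simp add: carrier_matD)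
  then show ?case using IH Bi F by simp
qed

lemma loader_carrier: "clifford_loader n x \<in> carrier_mat (2^n) (2^n)"
proof -
  have B: "\<forall>i\<in>set [0..<n]. ann n i + mat_adjoint (ann n i) \<in> carrier_mat (2^n) (2^n)"
    using ann_carrier by (auto intro!: add_carrier_mat adj_carrier)
  show ?thesis unfolding clifford_loader_def
    by (rule conjunct1[OF foldr_ip[where a="\<lambda>i. complex_of_real (x i)", OF B basis_carrier basis_carrier]])
qed

lemma cnj_sg[simp]: "cnj (sg S j) = sg S j"
  unfolding sg_def by simp

lemma amp_loader:
  assumes v: "v \<in> carrier_mat (2^n) 1"
  shows "amp n (clifford_loader n x * v) S = (\<Sum>j<n. complex_of_real (x j) *
     ((if j \<notin> S then sg S j else 0) * amp n v (insert j S) + (if j \<in> S then sg S j else 0) * amp n v (S - {j})))"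
proof -
  let ?N = "2^n"
  have eS: "basis_ket n S \<in> carrier_mat ?N 1" by (rule basis_carrier)
  have "amp n (clifford_loader n x * v) S = (\<Sum>j\<leftarrow>[0..<n]. complex_of_real (x j) *
      (mat_adjoint (basis_ket n S) * ((ann n j + mat_adjoint (ann n j)) * v)) $$ (0,0))"
  proof -
    have B: "\<forall>i\<in>set [0..<n]. ann n i + mat_adjoint (ann n i) \<in> carrier_mat (2^n) (2^n)"
      using ann_carrier by (auto intro!: add_carrier_mat adj_carrier)
    show ?thesis unfolding amp_def clifford_loader_def
      by (rule conjunct2[OF foldr_ip[where a="\<lambda>i. complex_of_real (x i)", OF B eS v]])
  qed
  also have "\<dots> = (\<Sum>j<n. complex_of_real (x j) *
     ((if j \<notin> S then sg S j else 0) * amp n v (insert j S) + (if j \<in> S then sg S j else 0) * amp n v (S - {j})))"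
    unfolding sum_list_upt
  proof (rule sum.cong[OF refl])
    fix j assume "j \<in> {..<n}"
    then have j: "j < n" by simp
    have a: "ann n j \<in> carrier_mat ?N ?N" using j by (rule ann_carrier)
    have a': "mat_adjoint (ann n j) \<in> carrier_mat ?N ?N" using a by auto
    have aw: "mat_adjoint (basis_ket n S) \<in> carrier_mat 1 ?N" using eS by auto
    have "mat_adjoint (basis_ket n S) * ((ann n j + mat_adjoint (ann n j)) * v) =
      mat_adjoint (basis_ket n S) * (ann n j * v) + mat_adjoint (basis_ket n S) * (mat_adjoint (ann n j) * v)"
    proof -
      have "(ann n j + mat_adjoint (ann n j)) * v = ann n j * v + mat_adjoint (ann n j) * v"
        by (rule add_mult_distrib_mat[OF a a' v])
      also have "mat_adjoint (basis_ket n S) * \<dots> = mat_adjoint (basis_ket n S) * (ann n j * v) + mat_adjoint (basis_ket n S) * (mat_adjoint (ann n j) * v)"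
        by (rule mult_add_distrib_mat[OF aw], insert a a' v, auto)
      finally show ?thesis .
    qed
    then have "(mat_adjoint (basis_ket n S) * ((ann n j + mat_adjoint (ann n j)) * v)) $$ (0,0) =
      (mat_adjoint (basis_ket n S) * (ann n j * v)) $$ (0,0) + (mat_adjoint (basis_ket n S) * (mat_adjoint (ann n j) * v)) $$ (0,0)"
      using a a' v aw eS by (simp add: carrier_matD)
    also have "(mat_adjoint (basis_ket n S) * (ann n j * v)) $$ (0,0) = (mat_adjoint (mat_adjoint (ann n j) * basis_ket n S) * v) $$ (0,0)"
      by (rule ip_adj[OF eS a v])
    also have "\<dots> = (if j \<notin> S then sg S j else 0) * amp n v (insert j S)"
      unfolding ann_adj_basis[OF j] amp_def by (subst smult_ip[OF basis_carrier v], simp)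
    also have "(mat_adjoint (basis_ket n S) * (mat_adjoint (ann n j) * v)) $$ (0,0) = (mat_adjoint (mat_adjoint (mat_adjoint (ann n j)) * basis_ket n S) * v) $$ (0,0)"
      by (rule ip_adj[OF eS a' v])
    also have "\<dots> = (if j \<in> S then sg S j else 0) * amp n v (S - {j})"
      unfolding mat_adjoint_adjoint ann_basis[OF j] amp_def by (subst smult_ip[OF basis_carrier v], simp)
    finally show "complex_of_real (x j) * (mat_adjoint (basis_ket n S) * ((ann n j + mat_adjoint (ann n j)) * v)) $$ (0,0) =
      complex_of_real (x j) * ((if j \<notin> S then sg S j else 0) * amp n v (insert j S) + (if j \<in> S then sg S j else 0) * amp n v (S - {j}))"
      by simp
  qed
  finally show ?thesis .
qed

lemma amp_vacuum:
  assumes "S \<subseteq> {0..<n}"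
  shows "amp n (vacuum n) S = (if S = {} then 1 else 0)"
  unfolding amp_def vacuum_def using basis_ip[OF assms, of "{}"] by simp


definition cnt :: "nat set \<Rightarrow> nat \<Rightarrow> nat" where "cnt C y = card {a\<in>C. a < y}"

lemma cnt_less: assumes "finite C" "y \<in> C" shows "cnt C y < card C"
proof -
  have s: "{a\<in>C. a < y} \<subset> C" using assms by auto
  show ?thesis unfolding cnt_def by (rule psubset_card_mono[OF assms(1) s])
qed

lemma Mk0_carrier: "card C = r \<Longrightarrow> Mk X r 0 C \<in> carrier_mat r r"
  unfolding Mk_def by auto

theorem cauchy_binet_sq:
  assumes X: "X \<in> carrier_mat n r"
  shows "det (transpose_mat X * X) = (\<Sum>C\<in>{C. C \<subseteq> {0..<n} \<and> card C = r}. (det (Mk X r 0 C))^2)"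
proof -
  let ?A = "transpose_mat X"
  let ?U = "{0..<r}"
  let ?F = "{f. (\<forall>i\<in>?U. f i \<in> {0..<n}) \<and> (\<forall>i. i \<notin> ?U \<longrightarrow> f i = i)}"
  let ?FI = "{f\<in>?F. inj_on f ?U}"
  let ?Cs = "{C. C \<subseteq> {0..<n} \<and> card C = r}"
  define R where "R f = mat\<^sub>r r r (\<lambda>i. row X (f i))" for f :: "nat \<Rightarrow> nat"
  define T where "T f = (\<Prod>i\<in>?U. X $$ (f i, i)) * det (R f)" for f
  have A: "?A \<in> carrier_mat r n" using X by auto
  have dX: "dim_col X = r" "dim_row X = n" using X by auto
  have fF: "finite ?F" by (rule finite_bounded_functions, auto)
  have "det (?A * X) = (\<Sum>f\<in>?F. det (mat\<^sub>r r r (\<lambda>i. ?A $$ (i, f i) \<cdot>\<^sub>v row X (f i))))"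
    unfolding mat_mul_finsum_alt[OF A X]
    by (rule det_linear_rows_sum, insert X, auto)
  also have "\<dots> = (\<Sum>f\<in>?F. T f)"
  proof (rule sum.cong[OF refl])
    fix f assume f: "f \<in> ?F"
    have "det (mat\<^sub>r r r (\<lambda>i. ?A $$ (i, f i) \<cdot>\<^sub>v row X (f i))) = prod (\<lambda>i. ?A $$ (i, f i)) ?U * det (R f)"
      unfolding R_def by (rule det_rows_mul, insert X, auto)
    also have "prod (\<lambda>i. ?A $$ (i, f i)) ?U = (\<Prod>i\<in>?U. X $$ (f i, i))"
      by (rule prod.cong, insert X f, auto)
    finally show "det (mat\<^sub>r r r (\<lambda>i. ?A $$ (i, f i) \<cdot>\<^sub>v row X (f i))) = T f" unfolding T_def .
  qed
  also have "\<dots> = (\<Sum>f\<in>?FI. T f)"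
  proof (rule sum.mono_neutral_right[OF fF])
    show "?FI \<subseteq> ?F" by auto
    show "\<forall>f\<in>?F - ?FI. T f = 0"
    proof
      fix f assume f: "f \<in> ?F - ?FI"
      then obtain i j where ij: "i \<in> ?U" "j \<in> ?U" "i \<noteq> j" "f i = f j" unfolding inj_on_def by auto
      have "det (R f) = 0"
        by (rule det_identical_rows[of _ r i j], insert ij, auto simp: R_def)
      then show "T f = 0" unfolding T_def by simp
    qed
  qed
  also have "\<dots> = (\<Sum>C\<in>?Cs. \<Sum>f\<in>{f\<in>?FI. f ` ?U = C}. T f)"
  proof (rule sum.group[symmetric])
    show "finite ?FI" by (rule finite_subset[OF _ fF]) auto
    show "finite ?Cs" by (rule finite_subset[of _ "Pow {0..<n}"], auto)
    show "(\<lambda>f. f ` ?U) ` ?FI \<subseteq> ?Cs" by (auto simp: card_image)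
  qed
  also have "\<dots> = (\<Sum>C\<in>?Cs. (det (Mk X r 0 C))^2)"
  proof (rule sum.cong[OF refl])
    fix C assume C: "C \<in> ?Cs"
    then have Cn: "C \<subseteq> {0..<n}" and cC: "card C = r" by auto
    have fC: "finite C" using Cn finite_subset by auto
    have UC: "{..<card C} = ?U" using cC by auto
    define h where "h p = (\<lambda>i. if i < r then pick C (p i) else i)" for p :: "nat \<Rightarrow> nat"
    define g where "g f = (\<lambda>i. if i < r then cnt C (f i) else i)" for f :: "nat \<Rightarrow> nat"
    let ?P = "{p. p permutes ?U}"
    have MC: "Mk X r 0 C \<in> carrier_mat r r" using cC by (rule Mk0_carrier)
    have eq1: "(\<Sum>p\<in>?P. T (h p)) = (\<Sum>f\<in>{f\<in>?FI. f ` ?U = C}. T f)"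
    proof (rule sum.reindex_bij_witness[where j = h and i = g])
      fix p assume "p \<in> ?P"
      then have p: "p permutes ?U" by simp
      have pr: "i < r \<Longrightarrow> p i < r" for i using permutes_in_image[OF p, of i] by auto
      show "g (h p) = p"
      proof
        fix i show "g (h p) i = p i"
          using pr[of i] permutes_not_in[OF p, of i] card_pick_le[of "p i" C] cC
          unfolding g_def h_def cnt_def by auto
      qed
      have inj: "inj_on (h p) ?U"
      proof (rule inj_onI)
        fix a b assume a: "a \<in> ?U" and b: "b \<in> ?U" and e: "h p a = h p b"
        then have "pick C (p a) = pick C (p b)" unfolding h_def by auto
        then have "p a = p b" using pick_inj[of C] pr a b cC unfolding inj_on_def by auto
        then show "a = b" using permutes_inj[OF p] unfolding inj_def by auto
      qed
      have img: "h p ` ?U = C"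
      proof -
        have "h p ` ?U = pick C ` (p ` ?U)" unfolding h_def by auto
        also have "p ` ?U = ?U" by (rule permutes_image[OF p])
        also have "pick C ` ?U = C" using pick_image[OF fC] UC by simp
        finally show ?thesis .
      qed
      have "\<forall>i\<in>?U. h p i \<in> {0..<n}"
      proof
        fix i assume "i \<in> ?U"
        then have "pick C (p i) \<in> C" using pr cC by (intro pick_in_set_le) auto
        then show "h p i \<in> {0..<n}" using Cn \<open>i \<in> ?U\<close> unfolding h_def by auto
      qed
      then show "h p \<in> {f\<in>?FI. f ` ?U = C}" using inj img unfolding h_def by auto
    next
      fix f assume "f \<in> {f\<in>?FI. f ` ?U = C}"
      then have fU: "\<And>i. i \<in> ?U \<Longrightarrow> f i \<in> C" and fo: "\<And>i. i \<notin> ?U \<Longrightarrow> f i = i"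
        and finj: "inj_on f ?U" by auto
      show "h (g f) = f"
      proof
        fix i show "h (g f) i = f i"
          using fU[of i] fo[of i] pick_card_in_set[of "f i" C] unfolding h_def g_def cnt_def by auto
      qed
      show "g f \<in> ?P"
      proof (simp, rule inj_on_nat_permutes)
        show "inj_on (g f) ?U"
        proof (rule inj_onI)
          fix a b assume a: "a \<in> ?U" and b: "b \<in> ?U" and e: "g f a = g f b"
          then have "pick C (cnt C (f a)) = pick C (cnt C (f b))" unfolding g_def by auto
          then have "f a = f b" using pick_card_in_set[of "f a" C] pick_card_in_set[of "f b" C] fU a b
            unfolding cnt_def by auto
          then show "a = b" using finj a b unfolding inj_on_def by auto
        qed
        show "g f \<in> ?U \<rightarrow> ?U" using cnt_less[OF fC fU] cC unfolding g_def by auto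
        show "finite ?U" by simp
        show "\<And>i. i \<notin> ?U \<Longrightarrow> g f i = i" unfolding g_def by auto
      qed
    qed simp
    have "(\<Sum>f\<in>{f\<in>?FI. f ` ?U = C}. T f) = (\<Sum>p\<in>?P. T (h p))" using eq1 by simp
    also have "\<dots> = (\<Sum>p\<in>?P. signof p * (\<Prod>i\<in>?U. X $$ (pick C (p i), i)) * det (Mk X r 0 C))"
    proof (rule sum.cong[OF refl])
      fix p assume "p \<in> ?P"
      then have p: "p permutes ?U" by simp
      have pr: "i < r \<Longrightarrow> p i < r" for i using permutes_in_image[OF p, of i] by auto
      have "R (h p) = mat r r (\<lambda>(i,j). Mk X r 0 C $$ (p i, j))"
      proof (rule eq_matI)
        fix i j assume i: "i < dim_row (mat r r (\<lambda>(i,j). Mk X r 0 C $$ (p i, j)))"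
          and j: "j < dim_col (mat r r (\<lambda>(i,j). Mk X r 0 C $$ (p i, j)))"
        have "pick C (p i) \<in> C" using pr i cC by (intro pick_in_set_le) auto
        then have "pick C (p i) < n" using Cn by auto
        then show "R (h p) $$ (i, j) = mat r r (\<lambda>(i,j). Mk X r 0 C $$ (p i, j)) $$ (i, j)"
          using i j pr cC by (auto simp: R_def h_def Mk_def dX)
      qed (auto simp: R_def)
      then have "det (R (h p)) = signof p * det (Mk X r 0 C)"
        using det_permute_rows[OF MC p] by simp
      moreover have "(\<Prod>i\<in>?U. X $$ (h p i, i)) = (\<Prod>i\<in>?U. X $$ (pick C (p i), i))"
        unfolding h_def by (rule prod.cong, auto)
      ultimately show "T (h p) = signof p * (\<Prod>i\<in>?U. X $$ (pick C (p i), i)) * det (Mk X r 0 C)"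
        unfolding T_def by simp
    qed
    also have "\<dots> = (\<Sum>p\<in>?P. signof p * (\<Prod>i\<in>?U. transpose_mat (Mk X r 0 C) $$ (i, p i))) * det (Mk X r 0 C)"
      unfolding sum_distrib_right
    proof (rule sum.cong[OF refl])
      fix p assume "p \<in> ?P"
      then have p: "p permutes ?U" by simp
      have pr: "i < r \<Longrightarrow> p i < r" for i using permutes_in_image[OF p, of i] by auto
      have "(\<Prod>i\<in>?U. transpose_mat (Mk X r 0 C) $$ (i, p i)) = (\<Prod>i\<in>?U. X $$ (pick C (p i), i))"
        by (rule prod.cong, insert pr cC, auto simp: Mk_def)
      then show "signof p * (\<Prod>i\<in>?U. X $$ (pick C (p i), i)) * det (Mk X r 0 C) =
         signof p * (\<Prod>i\<in>?U. transpose_mat (Mk X r 0 C) $$ (i, p i)) * det (Mk X r 0 C)" by simp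
    qed
    also have "(\<Sum>p\<in>?P. signof p * (\<Prod>i\<in>?U. transpose_mat (Mk X r 0 C) $$ (i, p i))) = det (transpose_mat (Mk X r 0 C))"
      by (rule det_def'[symmetric], insert MC, auto)
    also have "\<dots> = det (Mk X r 0 C)" by (rule det_transpose[OF MC])
    finally show "(\<Sum>f\<in>{f\<in>?FI. f ` ?U = C}. T f) = (det (Mk X r 0 C))^2"
      by (simp add: power2_eq_square)
  qed
  finally show ?thesis .
qed


definition st :: "real mat \<Rightarrow> nat \<Rightarrow> nat \<Rightarrow> nat \<Rightarrow> complex mat" where
  "st X n r k = foldr (\<lambda>k v. clifford_loader n (\<lambda>i. X $$ (i, k)) * v) [k..<r] (vacuum n)"

lemma st_carrier: "st X n r k \<in> carrier_mat (2^n) 1"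
proof -
  have "foldr (\<lambda>k v. clifford_loader n (\<lambda>i. X $$ (i, k)) * v) ks (vacuum n) \<in> carrier_mat (2^n) 1" for ks
    using basis_carrier[of n "{}"] by (induction ks, auto simp: vacuum_def intro!: mult_carrier_mat[OF loader_carrier])
  then show ?thesis unfolding st_def by blast
qed

lemma st_step: "k < r \<Longrightarrow> st X n r k = clifford_loader n (\<lambda>i. X $$ (i, k)) * st X n r (Suc k)"
  unfolding st_def by (simp add: upt_conv_Cons)

lemma st_r: "st X n r r = vacuum n"
  unfolding st_def by simp

lemma amp_st:
  assumes "k \<le> r"
  shows "\<forall>S. S \<subseteq> {0..<n} \<longrightarrow> (card S > r - k \<longrightarrow> amp n (st X n r k) S = 0) \<and>
     (card S = r - k \<longrightarrow> amp n (st X n r k) S = complex_of_real (det (Mk X r k S)))"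
  using assms
proof (induction "r - k" arbitrary: k)
  case 0
  then have k: "k = r" by simp
  show ?case
  proof (intro allI impI conjI)
    fix S assume S: "S \<subseteq> {0..<n}"
    have fS: "finite S" using S finite_subset by auto
    show "card S > r - k \<Longrightarrow> amp n (st X n r k) S = 0"
      using k amp_vacuum[OF S] st_r[of X n r] by auto
    assume "card S = r - k"
    then have "S = {}" using k fS by simp
    moreover have "det (Mk X r r {}) = 1" by (rule det_dim_zero, simp add: Mk_def)
    ultimately show "amp n (st X n r k) S = complex_of_real (det (Mk X r k S))"
      using k amp_vacuum[OF S] st_r[of X n r] by simp
  qed
next
  case (Suc d)
  then have k: "k < r" and d: "d = r - Suc k" by auto
  have IH: "\<And>S. S \<subseteq> {0..<n} \<Longrightarrow> (card S > r - Suc k \<longrightarrow> amp n (st X n r (Suc k)) S = 0) \<and>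
     (card S = r - Suc k \<longrightarrow> amp n (st X n r (Suc k)) S = complex_of_real (det (Mk X r (Suc k) S)))"
    using Suc.hyps(1)[OF d] k by auto
  show ?case
  proof (intro allI impI)
    fix S assume S: "S \<subseteq> {0..<n}"
    have fS: "finite S" using S finite_subset by auto
    let ?v = "st X n r (Suc k)"
    have expand: "amp n (st X n r k) S = (\<Sum>j<n. complex_of_real (X $$ (j,k)) *
     ((if j \<notin> S then sg S j else 0) * amp n ?v (insert j S) + (if j \<in> S then sg S j else 0) * amp n ?v (S - {j})))"
      unfolding st_step[OF k] by (rule amp_loader[OF st_carrier])
    have ins0: "card S \<ge> r - k \<Longrightarrow> j < n \<Longrightarrow> j \<notin> S \<Longrightarrow> amp n ?v (insert j S) = 0" for j
    proof -
      assume "card S \<ge> r - k" "j < n" "j \<notin> S"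
      moreover have "insert j S \<subseteq> {0..<n}" using S \<open>j < n\<close> by auto
      from IH[OF this] show ?thesis using fS k \<open>card S \<ge> r - k\<close> \<open>j \<notin> S\<close> by auto
    qed
    show "(card S > r - k \<longrightarrow> amp n (st X n r k) S = 0) \<and>
     (card S = r - k \<longrightarrow> amp n (st X n r k) S = complex_of_real (det (Mk X r k S)))"
    proof (intro conjI impI)
      assume c: "card S > r - k"
      have del0: "j \<in> S \<Longrightarrow> amp n ?v (S - {j}) = 0" for j
      proof -
        assume j: "j \<in> S"
        have "S - {j} \<subseteq> {0..<n}" using S by auto
        from IH[OF this] show ?thesis using fS c k j by auto
      qed
      show "amp n (st X n r k) S = 0"
        unfolding expand by (rule sum.neutral, insert ins0 del0 c, auto)
    next
      assume c: "card S = r - k"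
      have del: "j \<in> S \<Longrightarrow> amp n ?v (S - {j}) = complex_of_real (det (Mk X r (Suc k) (S - {j})))" for j
      proof -
        assume j: "j \<in> S"
        have "S - {j} \<subseteq> {0..<n}" using S by auto
        from IH[OF this] show ?thesis using fS c k j by auto
      qed
      have "amp n (st X n r k) S = (\<Sum>j<n. if j \<in> S then complex_of_real (X $$ (j,k)) * sg S j * complex_of_real (det (Mk X r (Suc k) (S - {j}))) else 0)"
        unfolding expand by (rule sum.cong, simp, insert ins0 del c, auto)
      also have "\<dots> = (\<Sum>j\<in>S. complex_of_real (X $$ (j,k)) * sg S j * complex_of_real (det (Mk X r (Suc k) (S - {j}))))"
      proof -
        have "{..<n} \<inter> S = S" using S by auto
        then show ?thesis by (simp add: sum.If_cases)
      qed
      also have "\<dots> = complex_of_real (\<Sum>j\<in>S. X $$ (j,k) * (-1) ^ card {t\<in>S. t < j} * det (Mk X r (Suc k) (S - {j})))"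
        by (simp add: sg_def)
      also have "\<dots> = complex_of_real (det (Mk X r k S))"
        by (subst laplace_Mk[OF fS k c], simp)
      finally show "amp n (st X n r k) S = complex_of_real (det (Mk X r k S))" .
    qed
  qed
qed

lemma submatrix_Mk:
  assumes X: "X \<in> carrier_mat n r" and C: "C \<subseteq> {0..<n}"
  shows "submatrix X C UNIV = Mk X r 0 C"
proof -
  have "{i. i < n \<and> i \<in> C} = C" using C by auto
  moreover have "{j. j < r \<and> j \<in> (UNIV :: nat set)} = {..<r}" by auto
  ultimately show ?thesis unfolding submatrix_def Mk_def using X
    by (intro eq_matI, auto simp: pick_UNIV)
qed

theorem mainTheorem1:
  fixes X :: "real mat" and n r :: nat
  assumes "1 \<le> r" and "r \<le> n"
    and "X \<in> carrier_mat n r"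
    and "\<forall>k < r. (\<Sum>i < n. (X $$ (i, k))\<^sup>2) = 1"
    and "\<forall>a \<in> carrier_vec r. X *\<^sub>v a = 0\<^sub>v n \<longrightarrow> a = 0\<^sub>v r"
    and "C \<subseteq> {0..<n}" and "card C = r"
  shows "cond_prob_Y X C r = \<bar>det (submatrix X C UNIV)\<bar>\<^sup>2 / det (transpose_mat X * X)"
proof -
  have X: "X \<in> carrier_mat n r" by fact
  have dX: "dim_row X = n" "dim_col X = r" using X by auto
  have cs: "columns_state X = st X n r 0" unfolding columns_state_def st_def dX ..
  have pY: "prob_Y X D = (det (Mk X r 0 D))^2" if D: "D \<subseteq> {0..<n}" "card D = r" for D
  proof -
    have "amp n (st X n r 0) D = complex_of_real (det (Mk X r 0 D))"
      using amp_st[where k=0 and r=r and X=X and n=n] D by auto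
    then have "prob_Y X D = (cmod (complex_of_real (det (Mk X r 0 D))))^2"
      unfolding prob_Y_def dX cs amp_def[symmetric] by simp
    also have "\<dots> = (det (Mk X r 0 D))^2" by simp
    finally show ?thesis .
  qed
  have "prob_card_Y X r = (\<Sum>D\<in>{D. D \<subseteq> {0..<n} \<and> card D = r}. (det (Mk X r 0 D))^2)"
    unfolding prob_card_Y_def dX by (rule sum.cong, auto simp: pY)
  also have "\<dots> = det (transpose_mat X * X)" by (rule cauchy_binet_sq[OF X, symmetric])
  finally have pc: "prob_card_Y X r = det (transpose_mat X * X)" .
  show ?thesis unfolding cond_prob_Y_def pc submatrix_Mk[OF X assms(6)]
    using pY[OF assms(6,7)] assms(7) by simp
qed


end
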